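(* Let $(S,\circ)$ be a monoid with identity $e$ and group of units $S^{-1}$. Then: (i) if $x\in S$ is indivisible, then $x$ is a building block of $S$, i.e. $x\in B(S)$; (ii) if $G\subseteq S$ is a generating set of $S$, then $(S^{-1}xS^{-1})\cap G\neq\emptyset$ for every $x\in B(S)$.
   Context: The group of units is $S^{-1}=\{x\in S:\exists y\in S,\ xy=yx=e\}$. An element $x\in S$ is indivisible if for every decomposition $x=yz$ with $y,z\in S$, exactly one of $y,z$ lies in $S^{-1}$. An element $x\in S$ is a building block of $S$ if for every decomposition $x=yz$ with $y,z\in S$ one has $y\in xS^{-1}$ or $z\in S^{-1}x$ (or both); $B(S)$ denotes the set of building blocks. $G\subseteq S$ is a generating set if every element of $S$ is a finite product $g_1\circ\cdots\circ g_m$ ($m\ge1$) of elements of $G$. For subsets, $S^{-1}xS^{-1}=\{uxv:u,v\in S^{-1}\}$. *)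

theory Defs
  imports Main
begin

text \<open>The monoid S is the whole type 'a of class monoid_mult, with identity 1.\<close>

definition units :: "'a::monoid_mult set" where
  "units = {x. \<exists>y. x * y = 1 \<and> y * x = 1}"

definition indivisible :: "'a::monoid_mult \<Rightarrow> bool" where
  "indivisible x \<longleftrightarrow> (\<forall>y z. x = y * z \<longrightarrow> ((y \<in> units) \<noteq> (z \<in> units)))"

definition building_block :: "'a::monoid_mult \<Rightarrow> bool" where
  "building_block x \<longleftrightarrow>
     (\<forall>y z. x = y * z \<longrightarrow> (y \<in> (\<lambda>u. x * u) ` units \<or> z \<in> (\<lambda>u. u * x) ` units))"

definition B :: "'a::monoid_mult set" where
  "B = {x. building_block x}"

definition generating_set :: "'a::monoid_mult set \<Rightarrow> bool" where
  "generating_set G \<longleftrightarrow>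
     (\<forall>s. \<exists>gs. gs \<noteq> [] \<and> set gs \<subseteq> G \<and> s = prod_list gs)"

definition unit_orbit :: "'a::monoid_mult \<Rightarrow> 'a set" where
  "unit_orbit x = {u * x * v | u v. u \<in> units \<and> v \<in> units}"

end

theory Submission
  imports Defs
begin

lemma one_unit: "1 \<in> units"
  by (simp add: units_def)

lemma key:
  fixes x :: "'a::monoid_mult"
  assumes bb: "building_block x"
  shows "gs \<noteq> [] \<Longrightarrow> u \<in> units \<Longrightarrow> v \<in> units \<Longrightarrow> u * x * v = prod_list gs
         \<Longrightarrow> \<exists>g \<in> set gs. g \<in> unit_orbit x"
proof (induction gs arbitrary: u)
  case Nil
  then show ?case by simp
next
  case (Cons g rest)
  show ?case
  proof (cases "rest = []")
    case True
    then show ?thesis using Cons.prems by (auto simp: unit_orbit_def)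
  next
    case False
    obtain u' where u': "u * u' = 1" "u' * u = 1" using Cons.prems(2) by (auto simp: units_def)
    obtain v' where v': "v * v' = 1" "v' * v = 1" using Cons.prems(3) by (auto simp: units_def)
    have u'u: "u' \<in> units" using u' by (auto simp: units_def)
    have v'u: "v' \<in> units" using v' by (auto simp: units_def)
    have eq: "u * x * v = g * prod_list rest" using Cons.prems(4) by simp
    have "u' * (u * x * v) * v' = (u' * u) * x * (v * v')" by (simp add: mult.assoc)
    then have "x = u' * (u * x * v) * v'" by (simp add: u' v')
    also have "\<dots> = u' * (g * prod_list rest) * v'" by (simp only: eq)
    also have "\<dots> = (u' * g) * (prod_list rest * v')" by (simp only: mult.assoc)
    finally have "x = (u' * g) * (prod_list rest * v')" .
    then have "u' * g \<in> (\<lambda>w. x * w) ` units \<or> prod_list rest * v' \<in> (\<lambda>w. w * x) ` units"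
      using bb unfolding building_block_def by blast
    then show ?thesis
    proof
      assume "u' * g \<in> (\<lambda>w. x * w) ` units"
      then obtain a where a: "a \<in> units" "u' * g = x * a" by auto
      have "u * (u' * g) = (u * u') * g" by (simp add: mult.assoc)
      then have "g = u * (u' * g)" by (simp add: u')
      also have "\<dots> = u * x * a" by (simp add: a mult.assoc)
      finally show ?thesis using Cons.prems(2) a(1) by (auto simp: unit_orbit_def)
    next
      assume "prod_list rest * v' \<in> (\<lambda>w. w * x) ` units"
      then obtain a where a: "a \<in> units" "prod_list rest * v' = a * x" by auto
      have "prod_list rest = (prod_list rest * v') * v" by (simp add: v' mult.assoc)
      also have "\<dots> = a * x * v" by (simp add: a)
      finally have "a * x * v = prod_list rest" by simp
      from Cons.IH[OF False a(1) Cons.prems(3) this] show ?thesis by auto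
    qed
  qed
qed

theorem lemma1:
  shows "(\<forall>x::'a::monoid_mult. indivisible x \<longrightarrow> x \<in> B)
       \<and> (\<forall>G::'a set. generating_set G \<longrightarrow> (\<forall>x \<in> B. unit_orbit x \<inter> G \<noteq> {}))"
proof (intro conjI allI impI ballI)
  fix x :: 'a
  assume ind: "indivisible x"
  show "x \<in> B" unfolding B_def building_block_def
  proof (intro CollectI allI impI)
    fix y z assume xyz: "x = y * z"
    then have "(y \<in> units) \<noteq> (z \<in> units)" using ind unfolding indivisible_def by blast
    then show "y \<in> (\<lambda>u. x * u) ` units \<or> z \<in> (\<lambda>u. u * x) ` units"
    proof (cases "y \<in> units")
      case True
      then obtain y' where y': "y * y' = 1" "y' * y = 1" by (auto simp: units_def)
      have "y' \<in> units" using y' by (auto simp: units_def)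
      moreover have "y' * x = (y' * y) * z" by (simp add: xyz mult.assoc)
      then have "z = y' * x" by (simp add: y')
      ultimately show ?thesis by blast
    next
      case False
      then have "z \<in> units" using \<open>(y \<in> units) \<noteq> (z \<in> units)\<close> by blast
      then obtain z' where z': "z * z' = 1" "z' * z = 1" by (auto simp: units_def)
      have "z' \<in> units" using z' by (auto simp: units_def)
      moreover have "y = x * z'" by (simp add: xyz z' mult.assoc)
      ultimately show ?thesis by blast
    qed
  qed
next
  fix G :: "'a set" and x :: 'a
  assume gen: "generating_set G" and xB: "x \<in> B"
  obtain gs where gs: "gs \<noteq> []" "set gs \<subseteq> G" "x = prod_list gs"
    using gen unfolding generating_set_def by blast
  have "1 * x * 1 = prod_list gs" using gs by simp
  from key[OF _ gs(1) one_unit one_unit this] xB obtain g where "g \<in> set gs" "g \<in> unit_orbit x"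
    by (auto simp: B_def)
  then show "unit_orbit x \<inter> G \<noteq> {}" using gs(2) by blast
qed

end
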